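(* If $d$ is a proper tree decomposition of a chordal graph $g$, then $\mathrm{bags}(d)=\mathrm{MaxClq}(g)$.
   Context: A graph is chordal if every cycle of length greater than three has a chord. $\mathrm{MaxClq}(g)$ is the set of maximal cliques of $g$ (cliques not strictly contained in another clique). A tree decomposition of $g$ is a pair $(t,\beta)$ with $t$ a tree and $\beta:V(t)\to 2^{V(g)}$ such that every node of $g$ lies in some $\beta(v)$, every edge of $g$ is contained in some $\beta(v)$, and whenever $v$ lies on the path between $u$ and $w$ in $t$, $\beta(u)\cap\beta(w)\subseteq\beta(v)$. The sets $\beta(v)$ are bags; $\mathrm{bags}(d)$ is the set of bags. Write $d_1\sqsubseteq d_2$ if every bag of $d_1$ is contained in some bag of $d_2$. $d'$ strictly subsumes $d$ if $d'\sqsubseteq d$ and $\mathrm{bags}(d)\not\subseteq\mathrm{bags}(d')$; $d$ is proper if no tree decomposition of $g$ strictly subsumes it. *)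

theory Defs
  imports Main
begin

type_synonym 'a graph = "'a set \<times> 'a set set"

definition verts :: "'a graph \<Rightarrow> 'a set" where "verts g = fst g"
definition edges :: "'a graph \<Rightarrow> 'a set set" where "edges g = snd g"

definition wf_graph :: "'a graph \<Rightarrow> bool" where
  "wf_graph g \<longleftrightarrow> finite (verts g) \<and> (\<forall>e\<in>edges g. e \<subseteq> verts g \<and> card e = 2)"

definition adj :: "'a graph \<Rightarrow> 'a \<Rightarrow> 'a \<Rightarrow> bool" where
  "adj g u v \<longleftrightarrow> {u, v} \<in> edges g"

definition is_cycle :: "'a graph \<Rightarrow> 'a list \<Rightarrow> bool" where
  "is_cycle g cs \<longleftrightarrow> length cs \<ge> 3 \<and> distinct cs \<and> set cs \<subseteq> verts g \<and>
     (\<forall>i<length cs. adj g (cs ! i) (cs ! ((i + 1) mod length cs)))"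

definition has_chord :: "'a graph \<Rightarrow> 'a list \<Rightarrow> bool" where
  "has_chord g cs \<longleftrightarrow> (\<exists>i<length cs. \<exists>j<length cs. i \<noteq> j \<and>
     j \<noteq> (i + 1) mod length cs \<and> i \<noteq> (j + 1) mod length cs \<and> adj g (cs ! i) (cs ! j))"

definition chordal :: "'a graph \<Rightarrow> bool" where
  "chordal g \<longleftrightarrow> (\<forall>cs. is_cycle g cs \<and> length cs > 3 \<longrightarrow> has_chord g cs)"

definition is_clique :: "'a graph \<Rightarrow> 'a set \<Rightarrow> bool" where
  "is_clique g C \<longleftrightarrow> C \<subseteq> verts g \<and> (\<forall>u\<in>C. \<forall>v\<in>C. u \<noteq> v \<longrightarrow> adj g u v)"

definition MaxClq :: "'a graph \<Rightarrow> 'a set set" where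
  "MaxClq g = {C. is_clique g C \<and> \<not> (\<exists>C'. is_clique g C' \<and> C \<subset> C')}"

definition is_path :: "'a graph \<Rightarrow> 'a list \<Rightarrow> bool" where
  "is_path g ps \<longleftrightarrow> ps \<noteq> [] \<and> distinct ps \<and> set ps \<subseteq> verts g \<and>
     (\<forall>i. Suc i < length ps \<longrightarrow> adj g (ps ! i) (ps ! Suc i))"

definition connected_graph :: "'a graph \<Rightarrow> bool" where
  "connected_graph g \<longleftrightarrow> (\<forall>u\<in>verts g. \<forall>w\<in>verts g.
     \<exists>ps. is_path g ps \<and> hd ps = u \<and> last ps = w)"

definition is_tree :: "'a graph \<Rightarrow> bool" where
  "is_tree t \<longleftrightarrow> wf_graph t \<and> verts t \<noteq> {} \<and> connected_graph t \<and> (\<nexists>cs. is_cycle t cs)"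

definition on_path :: "'a graph \<Rightarrow> 'a \<Rightarrow> 'a \<Rightarrow> 'a \<Rightarrow> bool" where
  "on_path t u v w \<longleftrightarrow> (\<exists>ps. is_path t ps \<and> hd ps = u \<and> last ps = w \<and> v \<in> set ps)"

definition tree_decomp :: "'a graph \<Rightarrow> 'b graph \<times> ('b \<Rightarrow> 'a set) \<Rightarrow> bool" where
  "tree_decomp g d \<longleftrightarrow> (case d of (t, \<beta>) \<Rightarrow>
     is_tree t \<and>
     (\<forall>v\<in>verts t. \<beta> v \<subseteq> verts g) \<and>
     (\<forall>x\<in>verts g. \<exists>v\<in>verts t. x \<in> \<beta> v) \<and>
     (\<forall>e\<in>edges g. \<exists>v\<in>verts t. e \<subseteq> \<beta> v) \<and>
     (\<forall>u\<in>verts t. \<forall>v\<in>verts t. \<forall>w\<in>verts t. on_path t u v w \<longrightarrow> \<beta> u \<inter> \<beta> w \<subseteq> \<beta> v))"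

definition bags :: "'b graph \<times> ('b \<Rightarrow> 'a set) \<Rightarrow> 'a set set" where
  "bags d = (case d of (t, \<beta>) \<Rightarrow> \<beta> ` verts t)"

definition subsumed :: "'b graph \<times> ('b \<Rightarrow> 'a set) \<Rightarrow> 'c graph \<times> ('c \<Rightarrow> 'a set) \<Rightarrow> bool" where
  "subsumed d1 d2 \<longleftrightarrow> (\<forall>B\<in>bags d1. \<exists>B'\<in>bags d2. B \<subseteq> B')"

definition strictly_subsumes :: "'c graph \<times> ('c \<Rightarrow> 'a set) \<Rightarrow> 'b graph \<times> ('b \<Rightarrow> 'a set) \<Rightarrow> bool" where
  "strictly_subsumes d' d \<longleftrightarrow> subsumed d' d \<and> \<not> (bags d \<subseteq> bags d')"

text \<open>Proper: no tree decomposition strictly subsumes d. Competitors are trees whose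
  nodes are natural numbers (every finite tree is isomorphic to one).\<close>
definition proper :: "'a graph \<Rightarrow> 'b graph \<times> ('b \<Rightarrow> 'a set) \<Rightarrow> bool" where
  "proper g d \<longleftrightarrow> tree_decomp g d \<and>
     \<not> (\<exists>d' :: nat graph \<times> (nat \<Rightarrow> 'a set). tree_decomp g d' \<and> strictly_subsumes d' d)"

end

theory Submission
  imports Defs
begin

fun consec :: "'a list \<Rightarrow> 'a \<Rightarrow> 'a \<Rightarrow> bool" where
  "consec (a # b # l) u v = ((a = u \<and> b = v) \<or> consec (b # l) u v)"
| "consec _ u v = False"

lemma consec_Cons: "consec (x # l) u v \<longleftrightarrow> (l \<noteq> [] \<and> u = x \<and> v = hd l) \<or> consec l u v"
  by (cases l) auto

lemma consec_nth: "consec l u v \<longleftrightarrow> (\<exists>i. Suc i < length l \<and> l!i = u \<and> l!Suc i = v)"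
proof (induction l u v rule: consec.induct)
  case (1 a b l u v)
  show ?case
  proof
    assume "consec (a # b # l) u v"
    then show "\<exists>i. Suc i < length (a # b # l) \<and> (a # b # l) ! i = u \<and> (a # b # l) ! Suc i = v"
      using 1 by auto
  next
    assume "\<exists>i. Suc i < length (a # b # l) \<and> (a # b # l) ! i = u \<and> (a # b # l) ! Suc i = v"
    then obtain i where i: "Suc i < length (a # b # l)" "(a # b # l) ! i = u" "(a # b # l) ! Suc i = v" by blast
    show "consec (a # b # l) u v"
    proof (cases i)
      case 0 then show ?thesis using i by simp
    next
      case (Suc j) then show ?thesis using i 1 by auto
    qed
  qed
qed auto

lemma consec_append: "consec (A @ B) u v \<longleftrightarrow> consec A u v \<or> consec B u v \<or> (A \<noteq> [] \<and> B \<noteq> [] \<and> u = last A \<and> v = hd B)"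
  by (induction A) (auto simp: consec_Cons)

lemma consec_rev: "consec (rev l) u v \<longleftrightarrow> consec l v u"
  by (induction l) (auto simp: consec_append consec_Cons hd_rev last_rev)

lemma consec_set: "consec l u v \<Longrightarrow> u \<in> set l \<and> v \<in> set l"
  by (induction l u v rule: consec.induct) auto

lemma adj_sym: "adj g u v \<longleftrightarrow> adj g v u"
  by (simp add: adj_def insert_commute)

lemma adj_verts: "wf_graph g \<Longrightarrow> adj g u v \<Longrightarrow> u \<in> verts g \<and> v \<in> verts g \<and> u \<noteq> v"
proof -
  assume "wf_graph g" "adj g u v"
  then have "{u,v} \<subseteq> verts g" "card {u,v} = 2" unfolding wf_graph_def adj_def by auto
  then show ?thesis by (cases "u = v") auto
qed

lemma is_path_consec: "is_path g l \<longleftrightarrow> l \<noteq> [] \<and> distinct l \<and> set l \<subseteq> verts g \<and> (\<forall>u v. consec l u v \<longrightarrow> adj g u v)"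
  unfolding is_path_def consec_nth by blast

lemma nth_cyc: "cs \<noteq> [] \<Longrightarrow> i < length cs \<Longrightarrow> (cs @ [hd cs]) ! Suc i = cs ! (Suc i mod length cs)"
proof (cases "Suc i < length cs")
  case False
  assume "cs \<noteq> []" "i < length cs"
  then have "Suc i = length cs" using False by simp
  then show ?thesis using \<open>cs \<noteq> []\<close> by (simp add: nth_append hd_conv_nth)
qed (auto simp: nth_append)

lemma consec_cyc: "cs \<noteq> [] \<Longrightarrow> consec (cs @ [hd cs]) u v \<longleftrightarrow> (\<exists>i<length cs. cs!i = u \<and> cs!(Suc i mod length cs) = v)"
  unfolding consec_nth
  apply (auto simp: nth_cyc)
   apply (metis less_Suc_eq nth_append nth_cyc)
  by (metis le_imp_less_Suc less_or_eq_imp_le nth_append nth_cyc)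

lemma is_cycle_consec: "is_cycle g cs \<longleftrightarrow> 3 \<le> length cs \<and> distinct cs \<and> set cs \<subseteq> verts g \<and> (\<forall>u v. consec (cs @ [hd cs]) u v \<longrightarrow> adj g u v)"
proof -
  have "cs \<noteq> [] \<Longrightarrow> (\<forall>i<length cs. adj g (cs ! i) (cs ! ((i + 1) mod length cs))) \<longleftrightarrow> (\<forall>u v. consec (cs @ [hd cs]) u v \<longrightarrow> adj g u v)"
  proof -
    assume ne: "cs \<noteq> []"
    show ?thesis
    proof
      assume H: "\<forall>i<length cs. adj g (cs ! i) (cs ! ((i + 1) mod length cs))"
      show "\<forall>u v. consec (cs @ [hd cs]) u v \<longrightarrow> adj g u v"
        using H consec_cyc[OF ne] by auto
    next
      assume H: "\<forall>u v. consec (cs @ [hd cs]) u v \<longrightarrow> adj g u v"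
      show "\<forall>i<length cs. adj g (cs ! i) (cs ! ((i + 1) mod length cs))"
        using H consec_cyc[OF ne] by auto
    qed
  qed
  note eq = this
  show ?thesis
  proof (cases "cs = []")
    case True then show ?thesis by (simp add: is_cycle_def)
  next
    case False
    from eq[OF False] show ?thesis unfolding is_cycle_def by blast
  qed
qed

lemma chord_vert: assumes "has_chord g cs" "distinct cs" "cs \<noteq> []"
  shows "\<exists>u v. u \<in> set cs \<and> v \<in> set cs \<and> u \<noteq> v \<and> \<not> consec (cs@[hd cs]) u v \<and> \<not> consec (cs@[hd cs]) v u \<and> adj g u v"
proof -
  obtain i j where ij: "i < length cs" "j < length cs" "i \<noteq> j" "j \<noteq> (i + 1) mod length cs" "i \<noteq> (j + 1) mod length cs" "adj g (cs ! i) (cs ! j)"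
    using assms(1) unfolding has_chord_def by blast
  have 1: "\<not> consec (cs@[hd cs]) (cs!i) (cs!j)"
  proof
    assume "consec (cs@[hd cs]) (cs!i) (cs!j)"
    then obtain k where k: "k < length cs" "cs!k = cs!i" "cs!(Suc k mod length cs) = cs!j" using consec_cyc assms by metis
    then have "k = i" using assms(2) ij nth_eq_iff_index_eq by metis
    moreover have "Suc k mod length cs = j" using k ij assms(2) nth_eq_iff_index_eq assms(3)
      by (metis length_greater_0_conv mod_less_divisor)
    ultimately show False using ij by simp
  qed
  have 2: "\<not> consec (cs@[hd cs]) (cs!j) (cs!i)"
  proof
    assume "consec (cs@[hd cs]) (cs!j) (cs!i)"
    then obtain k where k: "k < length cs" "cs!k = cs!j" "cs!(Suc k mod length cs) = cs!i" using consec_cyc assms by metis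
    then have "k = j" using assms(2) ij nth_eq_iff_index_eq by metis
    moreover have "Suc k mod length cs = i" using k ij assms(2) nth_eq_iff_index_eq assms(3)
      by (metis length_greater_0_conv mod_less_divisor)
    ultimately show False using ij by simp
  qed
  show ?thesis using 1 2 ij assms(2) by (metis nth_eq_iff_index_eq nth_mem)
qed


lemma path_rev: "is_path g l \<Longrightarrow> is_path g (rev l)"
  unfolding is_path_consec by (auto simp: consec_rev) (metis adj_sym)

lemma path_shortcut_aux:
  assumes "is_path g (A @ u # B @ v # C)" "B \<noteq> []" "adj g u v"
  shows "is_path g (A @ u # v # C)"
  using assms unfolding is_path_consec by (auto simp: consec_append consec_Cons)

lemma path_shortcut:
  assumes p: "is_path g l" and uv: "u \<in> set l" "v \<in> set l" "u \<noteq> v" "adj g u v"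
    and nc: "\<not> consec l u v" "\<not> consec l v u"
  shows "\<exists>l'. is_path g l' \<and> hd l' = hd l \<and> last l' = last l \<and> set l' \<subseteq> set l \<and> length l' < length l \<and> u \<in> set l' \<and> v \<in> set l'"
proof -
  have gen: "\<exists>l'. is_path g l' \<and> hd l' = hd l \<and> last l' = last l \<and> set l' \<subseteq> set l \<and> length l' < length l \<and> a \<in> set l' \<and> b \<in> set l'"
    if "l = A @ a # B @ b # C" "adj g a b" "\<not> consec l a b" for A B C a b
  proof -
    have "B \<noteq> []" using that by (auto simp: consec_append)
    then show ?thesis using that p path_shortcut_aux[of g A a B b C]
      by (intro exI[of _ "A @ a # b # C"]) (cases A; auto)
  qed
  obtain A R where l: "l = A @ u # R" using uv split_list by metis
  show ?thesis
  proof (cases "v \<in> set R")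
    case True
    then obtain B C where "R = B @ v # C" using split_list by metis
    then show ?thesis using gen[of A u B v C] l uv nc by auto
  next
    case False
    then have "v \<in> set A" using uv l by auto
    then obtain A1 B where "A = A1 @ v # B" using split_list by metis
    then show ?thesis using gen[of A1 v B u R] l uv nc adj_sym by fastforce
  qed
qed

lemma len2_set: "length l \<le> 2 \<Longrightarrow> set l \<subseteq> {hd l, last l}"
  by (cases l; cases "tl l"; auto)

lemma chord_lemma:
  assumes wf: "wf_graph g" and ch: "chordal g"
  shows "is_path g P \<Longrightarrow> is_path g Q \<Longrightarrow> hd P = x \<Longrightarrow> last P = y \<Longrightarrow> hd Q = y \<Longrightarrow> last Q = x \<Longrightarrow> x \<noteq> y
    \<Longrightarrow> 3 \<le> length P \<Longrightarrow> 3 \<le> length Q \<Longrightarrow> set P \<inter> set Q = {x,y}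
    \<Longrightarrow> (\<forall>u\<in>set P - {x,y}. \<forall>v\<in>set Q - {x,y}. \<not> adj g u v) \<Longrightarrow> adj g x y"
proof (induction "length P + length Q" arbitrary: P Q rule: less_induct)
  case less
  note pP = less.prems(1) and pQ = less.prems(2)
  define cs where "cs = butlast P @ butlast Q"
  have Pne: "P \<noteq> []" "Q \<noteq> []" using less.prems by auto
  have Peq: "P = butlast P @ [y]" using Pne less.prems by (metis append_butlast_last_id)
  have Qeq: "Q = butlast Q @ [x]" using Pne less.prems by (metis append_butlast_last_id)
  have hbP: "hd (butlast P) = x" using less.prems Peq
    by (metis hd_append2 append_is_Nil_conv butlast.simps(1) length_butlast diff_is_0_eq numeral_le_one_iff
        semiring_norm(70) le_zero_eq list.size(3) nat_le_linear order_trans)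
  have bPne: "butlast P \<noteq> []" using less.prems by (cases P) auto
  have hcs: "hd cs = x" using hbP bPne cs_def by simp
  have cs1: "cs @ [hd cs] = butlast P @ Q" using hcs Qeq cs_def by (metis append_assoc)
  have cons1: "consec (cs @ [hd cs]) u v \<longleftrightarrow> consec P u v \<or> consec Q u v" for u v
  proof -
    have "consec (butlast P @ Q) u v \<longleftrightarrow> consec (butlast P @ [y]) u v \<or> consec Q u v"
      using Pne less.prems bPne by (auto simp: consec_append consec_Cons)
    then show ?thesis using cs1 Peq by simp
  qed
  have dP: "distinct (butlast P)" "y \<notin> set (butlast P)" using pP Peq unfolding is_path_def
    by (metis distinct_append, metis distinct_append disjoint_iff list.set_intros(1))
  have dQ: "distinct (butlast Q)" "x \<notin> set (butlast Q)" using pQ Qeq unfolding is_path_def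
    by (metis distinct_append, metis distinct_append disjoint_iff list.set_intros(1))
  have sP: "set P = set (butlast P) \<union> {y}" using Peq by (metis set_append empty_set list.set(2))
  have sQ: "set Q = set (butlast Q) \<union> {x}" using Qeq by (metis set_append empty_set list.set(2))
  have scs: "set cs = set P \<union> set Q" using sP sQ cs_def less.prems by auto
  have cyc: "is_cycle g cs"
    unfolding is_cycle_consec
  proof (intro conjI allI impI)
    show "3 \<le> length cs" using less.prems cs_def by simp
    show "distinct cs" using dP dQ cs_def less.prems(10) sP sQ by auto
    show "set cs \<subseteq> verts g" using scs pP pQ unfolding is_path_def by auto
    fix u v assume "consec (cs @ [hd cs]) u v"
    then show "adj g u v" using cons1 pP pQ unfolding is_path_consec by blast
  qed
  have "length cs > 3" using less.prems cs_def by simp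
  then have "has_chord g cs" using ch cyc unfolding chordal_def by blast
  then obtain u v where uv: "u \<in> set cs" "v \<in> set cs" "u \<noteq> v" "\<not> consec P u v" "\<not> consec Q u v"
    "\<not> consec P v u" "\<not> consec Q v u" "adj g u v"
    using chord_vert[of g cs] cyc cons1 unfolding is_cycle_def by fastforce
  have xyP: "x \<in> set P" "y \<in> set P" "x \<in> set Q" "y \<in> set Q" using less.prems(10) by auto
  show ?case
  proof (cases "u \<in> set P \<and> v \<in> set P")
    case True
    show ?thesis
    proof (cases "{u,v} = {x,y}")
      case True then show ?thesis using uv adj_sym by (metis doubleton_eq_iff)
    next
      case False
      obtain P' where P': "is_path g P'" "hd P' = hd P" "last P' = last P" "set P' \<subseteq> set P" "length P' < length P"
        "u \<in> set P'" "v \<in> set P'"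
        using path_shortcut[OF pP] True uv by blast
      have "3 \<le> length P'"
      proof (rule ccontr)
        assume "\<not> 3 \<le> length P'"
        then have "set P' \<subseteq> {x,y}" using len2_set[of P'] P' less.prems by auto
        then show False using False P' uv by auto
      qed
      moreover have "x \<in> set P'" "y \<in> set P'" using P' less.prems hd_in_set[of P'] last_in_set[of P'] unfolding is_path_def by auto
      moreover have "set P' \<inter> set Q = {x,y}" using calculation P'(4) less.prems(10) xyP by auto
      moreover have "\<forall>u\<in>set P' - {x,y}. \<forall>v\<in>set Q - {x,y}. \<not> adj g u v" using P'(4) less.prems(11) by blast
      ultimately show ?thesis
        by (intro less.hyps[of P' Q]) (use P' less.prems in simp_all)
    qed
  next
    case notP: False
    show ?thesis
    proof (cases "u \<in> set Q \<and> v \<in> set Q")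
      case True
      show ?thesis
      proof (cases "{u,v} = {x,y}")
        case True then show ?thesis using uv adj_sym by (metis doubleton_eq_iff)
      next
        case False
        obtain Q' where Q': "is_path g Q'" "hd Q' = hd Q" "last Q' = last Q" "set Q' \<subseteq> set Q" "length Q' < length Q"
          "u \<in> set Q'" "v \<in> set Q'"
          using path_shortcut[OF pQ] True uv by blast
        have "3 \<le> length Q'"
        proof (rule ccontr)
          assume "\<not> 3 \<le> length Q'"
          then have "set Q' \<subseteq> {x,y}" using len2_set[of Q'] Q' less.prems by auto
          then show False using False Q' uv by auto
        qed
        moreover have "x \<in> set Q'" "y \<in> set Q'" using Q' less.prems hd_in_set[of Q'] last_in_set[of Q'] unfolding is_path_def by auto
        moreover have "set P \<inter> set Q' = {x,y}" using calculation Q'(4) less.prems(10) xyP by auto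
        moreover have "\<forall>u\<in>set P - {x,y}. \<forall>v\<in>set Q' - {x,y}. \<not> adj g u v" using Q'(4) less.prems(11) by blast
        ultimately show ?thesis
          by (intro less.hyps[of P Q']) (use Q' less.prems in simp_all)
      qed
    next
      case False
      have vu: "adj g v u" using uv(8) adj_sym by metis
      have "(u \<in> set P - {x,y} \<and> v \<in> set Q - {x,y}) \<or> (v \<in> set P - {x,y} \<and> u \<in> set Q - {x,y})"
        using False notP uv(1,2) scs xyP by blast
      then show ?thesis using less.prems(11) uv(8) vu by blast
    qed
  qed
qed


definition ind :: "'a graph \<Rightarrow> 'a set \<Rightarrow> 'a graph" where
  "ind g W = (W, {e \<in> edges g. e \<subseteq> W})"

lemma verts_ind[simp]: "verts (ind g W) = W" by (simp add: ind_def verts_def)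
lemma edges_ind[simp]: "edges (ind g W) = {e \<in> edges g. e \<subseteq> W}" by (simp add: ind_def edges_def)
lemma adj_ind: "adj (ind g W) u v \<longleftrightarrow> adj g u v \<and> u \<in> W \<and> v \<in> W"
  by (simp add: adj_def)

lemma wf_ind: "wf_graph g \<Longrightarrow> W \<subseteq> verts g \<Longrightarrow> wf_graph (ind g W)"
  unfolding wf_graph_def by (auto intro: finite_subset)

lemma chordal_ind: assumes "chordal g" "W \<subseteq> verts g" shows "chordal (ind g W)"
  unfolding chordal_def
proof (intro allI impI)
  fix cs assume H: "is_cycle (ind g W) cs \<and> 3 < length cs"
  then have "is_cycle g cs" using assms(2) unfolding is_cycle_def by (auto simp: adj_ind)
  then have "has_chord g cs" using H assms(1) unfolding chordal_def by blast
  moreover have "set cs \<subseteq> W" using H unfolding is_cycle_def by auto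
  ultimately show "has_chord (ind g W) cs" unfolding has_chord_def
    by (auto simp: adj_ind) (meson nth_mem subsetD)
qed

definition simplicial :: "'a graph \<Rightarrow> 'a \<Rightarrow> bool" where
  "simplicial g x \<longleftrightarrow> (\<forall>y z. adj g x y \<longrightarrow> adj g x z \<longrightarrow> y \<noteq> z \<longrightarrow> adj g y z)"

definition R :: "'a graph \<Rightarrow> 'a set \<Rightarrow> 'a \<Rightarrow> 'a set" where
  "R g W a = {v. \<exists>l. is_path g l \<and> hd l = a \<and> last l = v \<and> set l \<subseteq> W}"

lemma list_prop: "l \<noteq> [] \<Longrightarrow> P (hd l) \<Longrightarrow> (\<forall>y z. consec l y z \<longrightarrow> P y \<longrightarrow> P z) \<Longrightarrow> \<forall>v\<in>set l. P v"
proof (induction l)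
  case (Cons a l)
  show ?case
  proof (cases "l = []")
    case False
    have c1: "consec (a # l) a (hd l)" using False by (simp add: consec_Cons)
    have "P a" using Cons.prems(2) by simp
    then have h: "P (hd l)" using Cons.prems(3) c1 by blast
    have "\<forall>y z. consec l y z \<longrightarrow> P y \<longrightarrow> P z" using Cons.prems(3) by (simp add: consec_Cons)
    then have "\<forall>v\<in>set l. P v" using Cons.IH[OF False h] by blast
    then show ?thesis using Cons.prems(2) by simp
  next
    case True then show ?thesis using Cons.prems by simp
  qed
qed simp

lemma R_W: "v \<in> R g W a \<Longrightarrow> v \<in> W \<and> a \<in> W \<and> v \<in> verts g \<and> a \<in> verts g"
  unfolding R_def is_path_def by (auto dest: hd_in_set last_in_set)

lemma R_self: "a \<in> W \<Longrightarrow> a \<in> verts g \<Longrightarrow> a \<in> R g W a"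
  unfolding R_def by (intro CollectI exI[of _ "[a]"]) (auto simp: is_path_def)

lemma R_sym: "v \<in> R g W a \<Longrightarrow> a \<in> R g W v"
proof -
  assume "v \<in> R g W a"
  then obtain l where l: "is_path g l" "hd l = a" "last l = v" "set l \<subseteq> W" unfolding R_def by blast
  then have "l \<noteq> []" unfolding is_path_def by auto
  then have "is_path g (rev l) \<and> hd (rev l) = v \<and> last (rev l) = a \<and> set (rev l) \<subseteq> W"
    using l path_rev by (simp add: hd_rev last_rev)
  then show ?thesis unfolding R_def by blast
qed

lemma R_closed: assumes wf: "wf_graph g" and v: "v \<in> R g W a" and w: "w \<in> W" "adj g v w"
  shows "w \<in> R g W a"
proof -
  obtain l where l: "is_path g l" "hd l = a" "last l = v" "set l \<subseteq> W" using v unfolding R_def by blast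
  show ?thesis
  proof (cases "w \<in> set l")
    case True
    then obtain A B where lAB: "l = A @ w # B" using split_list by metis
    have "is_path g (A @ [w])" using l(1) unfolding lAB is_path_consec
      by (auto simp: consec_append consec_Cons)
    moreover have "hd (A @ [w]) = a" using l(2) lAB by (cases A) auto
    ultimately show ?thesis using l lAB unfolding R_def by (intro CollectI exI[of _ "A @ [w]"]) auto
  next
    case False
    have "is_path g (l @ [w])" using l(1,3) False w adj_verts[OF wf w(2)] unfolding is_path_consec
      by (auto simp: consec_append consec_Cons)
    moreover have "hd (l @ [w]) = a" using l unfolding is_path_def by simp
    ultimately show ?thesis using l w unfolding R_def by (intro CollectI exI[of _ "l @ [w]"]) auto
  qed
qed

lemma R_path: assumes wf: "wf_graph g" and "is_path g l" "set l \<subseteq> W" "hd l \<in> R g W a"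
  shows "set l \<subseteq> R g W a"
proof -
  have "\<forall>v\<in>set l. v \<in> R g W a"
  proof (rule list_prop)
    show "l \<noteq> []" using assms(2) unfolding is_path_def by auto
    show "hd l \<in> R g W a" by fact
    show "\<forall>y z. consec l y z \<longrightarrow> y \<in> R g W a \<longrightarrow> z \<in> R g W a"
    proof (intro allI impI)
      fix y z assume c: "consec l y z" and y: "y \<in> R g W a"
      have a: "adj g y z" using assms(2) c unfolding is_path_consec by blast
      have "z \<in> set l" using c consec_set by metis
      then have z: "z \<in> W" using assms(3) by blast
      show "z \<in> R g W a" by (rule R_closed[OF wf y z a])
    qed
  qed
  then show ?thesis by auto
qed

lemma R_trans: assumes wf: "wf_graph g" and "v \<in> R g W a" "w \<in> R g W v" shows "w \<in> R g W a"
proof -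
  obtain l where l: "is_path g l" "hd l = v" "last l = w" "set l \<subseteq> W" using assms(3) unfolding R_def by blast
  have "l \<noteq> []" using l(1) unfolding is_path_def by simp
  then have "w \<in> set l" using l(3) last_in_set by metis
  then show ?thesis using R_path[OF wf l(1,4)] assms(2) l(2) by blast
qed


definition dirac_concl :: "'a graph \<Rightarrow> bool" where
  "dirac_concl g \<longleftrightarrow> is_clique g (verts g) \<or>
     (\<exists>a b. a \<in> verts g \<and> b \<in> verts g \<and> a \<noteq> b \<and> \<not> adj g a b \<and> simplicial g a \<and> simplicial g b)"

lemma simp_transfer:
  assumes "simplicial (ind g W) c" "c \<in> W" "\<forall>w. adj g c w \<longrightarrow> w \<in> W"
  shows "simplicial g c"
  unfolding simplicial_def
proof (intro allI impI)
  fix y z assume a: "adj g c y" "adj g c z" "y \<noteq> z"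
  have "y \<in> W" "z \<in> W" using a assms(3) by blast+
  then have "adj (ind g W) c y" "adj (ind g W) c z" using a assms(2) adj_ind by metis+
  then have "adj (ind g W) y z" using assms(1) a(3) unfolding simplicial_def by blast
  then show "adj g y z" using adj_ind by metis
qed

lemma pick:
  assumes wf: "wf_graph g" and XS: "X \<inter> S = {}" and x0: "x0 \<in> X"
    and Scl: "\<forall>s\<in>S. \<forall>t\<in>S. s \<noteq> t \<longrightarrow> adj g s t"
    and NX: "\<forall>c\<in>X. \<forall>w. adj g c w \<longrightarrow> w \<in> X \<union> S"
    and D: "dirac_concl (ind g (X \<union> S))"
  shows "\<exists>c\<in>X. simplicial g c"
proof -
  let ?H = "ind g (X \<union> S)"
  from D consider (cl) "is_clique ?H (X \<union> S)"
    | (two) u v where "u \<in> X \<union> S" "v \<in> X \<union> S" "u \<noteq> v" "\<not> adj ?H u v" "simplicial ?H u" "simplicial ?H v"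
    using D unfolding dirac_concl_def verts_ind by blast
  then show ?thesis
  proof cases
    case cl
    then have sx: "simplicial ?H x0" using x0 unfolding is_clique_def simplicial_def by (auto simp: adj_ind)
    have "simplicial g x0" by (rule simp_transfer[OF sx]) (use x0 NX in auto)
    then show ?thesis using x0 by blast
  next
    case two
    have "u \<in> X \<or> v \<in> X"
    proof (rule ccontr)
      assume "\<not> (u \<in> X \<or> v \<in> X)"
      then have "u \<in> S" "v \<in> S" using two by auto
      then have "adj g u v" using Scl two by blast
      then show False using two \<open>u \<in> S\<close> \<open>v \<in> S\<close> by (simp add: adj_ind)
    qed
    then show ?thesis
    proof
      assume u: "u \<in> X"
      have "simplicial g u" by (rule simp_transfer[OF two(5)]) (use two(1) NX u in auto)
      then show ?thesis using u by blast
    next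
      assume u: "v \<in> X"
      have "simplicial g v" by (rule simp_transfer[OF two(6)]) (use two(2) NX u in auto)
      then show ?thesis using u by blast
    qed
  qed
qed

lemma dirac: "wf_graph g \<Longrightarrow> chordal g \<Longrightarrow> dirac_concl g"
proof (induction "card (verts g)" arbitrary: g rule: less_induct)
  case less
  note wf = less.prems(1) and ch = less.prems(2)
  show ?case
  proof (cases "is_clique g (verts g)")
    case True then show ?thesis unfolding dirac_concl_def by blast
  next
    case False
    then obtain a b where ab: "a \<in> verts g" "b \<in> verts g" "a \<noteq> b" "\<not> adj g a b"
      unfolding is_clique_def by blast
    define V where "V = verts g"
    define Na where "Na = {y. adj g a y}"
    define W where "W = V - insert a Na"
    define D where "D = R g W b"
    define S where "S = {s \<in> V - D. \<exists>d\<in>D. adj g s d}"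
    define C where "C = R g (V - S) a"
    have finV: "finite V" using wf unfolding wf_graph_def V_def by simp
    have bW: "b \<in> W" using ab adj_sym[of g a b] unfolding W_def Na_def V_def by auto
    have bD: "b \<in> D" unfolding D_def by (rule R_self[OF bW]) (use ab in simp)
    have DW: "D \<subseteq> W"
    proof
      fix v assume "v \<in> D" then show "v \<in> W" using R_W[of v g W b] D_def by simp
    qed
    have aD: "a \<notin> D" using DW W_def by blast
    have SNa: "S \<subseteq> Na"
    proof
      fix s assume s: "s \<in> S"
      then obtain d where d: "d \<in> D" "adj g s d" "s \<notin> D" "s \<in> V" unfolding S_def by blast
      have "d \<in> W" using d(1) DW by blast
      then have "s \<noteq> a" using d(2) unfolding W_def Na_def by blast
      moreover have "s \<in> insert a Na"
      proof (rule ccontr)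
        assume "s \<notin> insert a Na"
        then have "s \<in> W" using d W_def by blast
        then have "s \<in> D" using R_closed[OF wf, of d W b s] d adj_sym[of g s d] unfolding D_def by blast
        then show False using d by blast
      qed
      ultimately show "s \<in> Na" by blast
    qed
    have aS: "a \<notin> S" using SNa adj_verts[OF wf] unfolding Na_def by blast
    have aC: "a \<in> C" unfolding C_def by (rule R_self) (use aS ab V_def in auto)
    have CV: "C \<subseteq> V - S"
    proof
      fix v assume "v \<in> C" then show "v \<in> V - S" using R_W[of v g "V - S" a] C_def by simp
    qed
    have SV: "S \<subseteq> V" unfolding S_def by blast
    have DV: "D \<subseteq> V" using DW W_def by blast
    have DS: "D \<inter> S = {}" unfolding S_def by blast
    have CD: "C \<inter> D = {}"
    proof (rule ccontr)
      assume "C \<inter> D \<noteq> {}"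
      then obtain v where v: "v \<in> C" "v \<in> D" by blast
      from v(1) obtain l where l: "is_path g l" "hd l = a" "last l = v" "set l \<subseteq> V - S" unfolding C_def R_def by blast
      have lne: "l \<noteq> []" using l(1) by (simp add: is_path_def)
      have lp: "\<forall>z\<in>set l. z \<notin> D"
      proof (rule list_prop[OF lne])
        show "hd l \<notin> D" using l(2) aD by simp
        show "\<forall>y z. consec l y z \<longrightarrow> y \<notin> D \<longrightarrow> z \<notin> D"
        proof (intro allI impI)
          fix y z assume c: "consec l y z" and y: "y \<notin> D"
          have a: "adj g y z" using c l(1) unfolding is_path_consec by blast
          have "y \<in> set l" using consec_set[OF c] by simp
          then have yV: "y \<in> V" "y \<notin> S" using l(4) by auto
          show "z \<notin> D"
          proof
            assume "z \<in> D"
            then have "y \<in> S" using yV(1) y a unfolding S_def by blast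
            then show False using yV(2) by simp
          qed
        qed
      qed
      have "last l \<in> set l" using lne by simp
      then show False using lp l(3) v(2) by blast
    qed
    have NC: "\<forall>c\<in>C. \<forall>w. adj g c w \<longrightarrow> w \<in> C \<union> S"
    proof (intro ballI allI impI)
      fix c w assume "c \<in> C" "adj g c w"
      moreover have "w \<in> V" using adj_verts[OF wf calculation(2)] V_def by blast
      ultimately show "w \<in> C \<union> S" using R_closed[OF wf, of c "V - S" a w] unfolding C_def by blast
    qed
    have ND: "\<forall>c\<in>D. \<forall>w. adj g c w \<longrightarrow> w \<in> D \<union> S"
    proof (intro ballI allI impI)
      fix c w assume "c \<in> D" "adj g c w"
      moreover have "w \<in> V" using adj_verts[OF wf calculation(2)] V_def by blast
      moreover have "adj g w c" using calculation(2) adj_sym[of g c w] by blast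
      ultimately show "w \<in> D \<union> S" unfolding S_def by blast
    qed
    have noCD: "\<not> adj g c d" if "c \<in> C" "d \<in> D" for c d
      using that NC CD DS by blast
    have Scl: "\<forall>s\<in>S. \<forall>t\<in>S. s \<noteq> t \<longrightarrow> adj g s t"
    proof (intro ballI impI)
      fix s t assume s: "s \<in> S" and t: "t \<in> S" and st: "s \<noteq> t"
      obtain ds where ds: "ds \<in> D" "adj g s ds" using s unfolding S_def by blast
      obtain dt where dt: "dt \<in> D" "adj g t dt" using t unfolding S_def by blast
      have "ds \<in> R g W dt" using R_trans[OF wf R_sym[of dt g W b] ds(1)[unfolded D_def]] dt(1) unfolding D_def by blast
      then obtain l where l: "is_path g l" "hd l = dt" "last l = ds" "set l \<subseteq> W" unfolding R_def by blast
      have lD: "set l \<subseteq> D" using R_path[OF wf l(1,4)] l(2) dt(1) unfolding D_def by blast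
      have lne: "l \<noteq> []" using l unfolding is_path_def by simp
      have sD: "s \<notin> D" "t \<notin> D" using s t DS by auto
      have sa: "adj g s a" "adj g a t" using s t SNa adj_sym[of g a s] unfolding Na_def by blast+
      have sv: "s \<in> V" "t \<in> V" using s t SV by auto
      have P: "is_path g [s, a, t]" using sa st aS s t sv ab unfolding is_path_consec V_def by auto
      have Q: "is_path g (t # l @ [s])"
        unfolding is_path_consec
      proof (intro conjI allI impI)
        show "t # l @ [s] \<noteq> []" by simp
        show "distinct (t # l @ [s])" using l(1) lD sD st unfolding is_path_def by auto
        show "set (t # l @ [s]) \<subseteq> verts g" using l(1) sv unfolding is_path_def V_def by auto
        fix u v assume "consec (t # l @ [s]) u v"
        then have "(u = t \<and> v = hd l) \<or> consec l u v \<or> (u = last l \<and> v = s)"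
          using lne by (auto simp: consec_Cons consec_append)
        then show "adj g u v" using l dt ds adj_sym[of g s ds] unfolding is_path_consec by blast
      qed
      have "adj g s t"
      proof (rule chord_lemma[OF wf ch P Q])
        show "hd [s, a, t] = s" "last [s, a, t] = t" "hd (t # l @ [s]) = t" "last (t # l @ [s]) = s" "s \<noteq> t"
          using st by auto
        show "3 \<le> length [s, a, t]" by simp
        show "3 \<le> length (t # l @ [s])" using lne by (cases l) auto
        show "set [s, a, t] \<inter> set (t # l @ [s]) = {s, t}" using lD aD by auto
        show "\<forall>u\<in>set [s, a, t] - {s, t}. \<forall>v\<in>set (t # l @ [s]) - {s, t}. \<not> adj g u v"
          using lD DW unfolding W_def Na_def by auto
      qed
      then show "adj g s t" .
    qed
    have bCS: "b \<notin> C \<union> S" using bD CD DS by blast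
    have aDS: "a \<notin> D \<union> S" using aD aS by blast
    have "C \<union> S \<subset> V" using bCS CV SV ab V_def by blast
    then have c1: "card (C \<union> S) < card (verts g)" using psubset_card_mono[OF finV] V_def by simp
    have "D \<union> S \<subset> V" using aDS DV SV ab V_def by blast
    then have c2: "card (D \<union> S) < card (verts g)" using psubset_card_mono[OF finV] V_def by simp
    have CSV: "C \<union> S \<subseteq> verts g" "D \<union> S \<subseteq> verts g" using CV SV DV V_def by auto
    have d1: "dirac_concl (ind g (C \<union> S))"
      using less.hyps[OF _ wf_ind[OF wf CSV(1)] chordal_ind[OF ch CSV(1)]] c1 by simp
    have d2: "dirac_concl (ind g (D \<union> S))"
      using less.hyps[OF _ wf_ind[OF wf CSV(2)] chordal_ind[OF ch CSV(2)]] c2 by simp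
    obtain c where c: "c \<in> C" "simplicial g c"
      using pick[OF wf _ aC Scl NC d1] CV by blast
    obtain c' where c': "c' \<in> D" "simplicial g c'"
      using pick[OF wf DS bD Scl ND d2] by blast
    have "c \<noteq> c'" using c c' CD by blast
    moreover have "\<not> adj g c c'" using noCD c c' by blast
    moreover have "c \<in> verts g" "c' \<in> verts g" using c c' CV DV V_def by auto
    ultimately show ?thesis unfolding dirac_concl_def using c c' by blast
  qed
qed

lemma simplicial_exists: "wf_graph g \<Longrightarrow> chordal g \<Longrightarrow> verts g \<noteq> {} \<Longrightarrow> \<exists>x\<in>verts g. simplicial g x"
proof -
  assume wf: "wf_graph g" and ch: "chordal g" and ne: "verts g \<noteq> {}"
  from dirac[OF wf ch] consider (cl) "is_clique g (verts g)" | (two) a where "a \<in> verts g" "simplicial g a"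
    unfolding dirac_concl_def by blast
  then show ?thesis
  proof cases
    case cl
    obtain x where x: "x \<in> verts g" using ne by blast
    have "simplicial g x" unfolding simplicial_def
    proof (intro allI impI)
      fix y z assume "adj g x y" "adj g x z" "y \<noteq> z"
      then show "adj g y z" using cl adj_verts[OF wf] unfolding is_clique_def by blast
    qed
    then show ?thesis using x by blast
  qed blast
qed


lemma path_ind_iff: "W \<subseteq> verts g \<Longrightarrow> is_path (ind g W) ps \<longleftrightarrow> is_path g ps \<and> set ps \<subseteq> W"
proof -
  assume W: "W \<subseteq> verts g"
  show ?thesis
  proof
    assume "is_path (ind g W) ps"
    then show "is_path g ps \<and> set ps \<subseteq> W" using W unfolding is_path_consec adj_ind by auto
  next
    assume a: "is_path g ps \<and> set ps \<subseteq> W"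
    have "\<forall>u v. consec ps u v \<longrightarrow> adj (ind g W) u v"
    proof (intro allI impI)
      fix u v assume c: "consec ps u v"
      then have "u \<in> W" "v \<in> W" using consec_set[OF c] a by auto
      moreover have "adj g u v" using a c unfolding is_path_consec by blast
      ultimately show "adj (ind g W) u v" by (simp add: adj_ind)
    qed
    then show "is_path (ind g W) ps" using a unfolding is_path_consec by simp
  qed
qed

lemma cycle_ind: "W \<subseteq> verts g \<Longrightarrow> is_cycle (ind g W) cs \<Longrightarrow> is_cycle g cs"
  unfolding is_cycle_consec adj_ind by auto

lemma on_path_ind: "W \<subseteq> verts g \<Longrightarrow> on_path (ind g W) a v b \<Longrightarrow> on_path g a v b"
  unfolding on_path_def using path_ind_iff by blast

lemma path_len2: "is_path g ps \<Longrightarrow> hd ps \<noteq> last ps \<Longrightarrow> \<exists>qs p l. ps = qs @ [p, l]"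
proof -
  assume a: "is_path g ps" "hd ps \<noteq> last ps"
  then have "ps \<noteq> []" unfolding is_path_def by simp
  then obtain ps1 l where 1: "ps = ps1 @ [l]" by (metis rev_exhaust)
  have "ps1 \<noteq> []" using a 1 by auto
  then obtain qs p where "ps1 = qs @ [p]" by (metis rev_exhaust)
  then show ?thesis using 1 by auto
qed

lemma leaf_exists:
  assumes t: "is_tree t" and c: "2 \<le> card (verts t)"
  shows "\<exists>l p. l \<in> verts t \<and> adj t l p \<and> (\<forall>q. adj t l q \<longrightarrow> q = p)"
proof -
  have wf: "wf_graph t" and fin: "finite (verts t)" using t unfolding is_tree_def wf_graph_def by auto
  have "verts t \<noteq> {}" using c by (metis card.empty not_numeral_le_zero)
  then obtain u where u: "u \<in> verts t" by blast
  have "verts t - {u} \<noteq> {}"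
  proof
    assume "verts t - {u} = {}"
    then have "verts t \<subseteq> {u}" by auto
    then have "card (verts t) \<le> card {u}" by (rule card_mono[rotated]) simp
    then show False using c by simp
  qed
  then obtain w where w: "w \<in> verts t" "w \<noteq> u" by blast
  obtain ps0 where ps0: "is_path t ps0" "hd ps0 = u" "last ps0 = w"
    using t u w unfolding is_tree_def connected_graph_def by blast
  define P where "P = (\<lambda>ps. is_path t ps \<and> hd ps \<noteq> last ps)"
  have P0: "P ps0" using ps0 w unfolding P_def by simp
  have bnd: "\<forall>ps. P ps \<longrightarrow> length ps < card (verts t) + 1"
  proof (intro allI impI)
    fix ps assume "P ps"
    then have d: "distinct ps" "set ps \<subseteq> verts t" unfolding P_def is_path_def by auto
    have "length ps = card (set ps)" using d(1) by (simp add: distinct_card)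
    also have "\<dots> \<le> card (verts t)" by (rule card_mono[OF fin d(2)])
    finally show "length ps < card (verts t) + 1" by simp
  qed
  obtain ps where psP: "P ps" and mx: "\<forall>ps'. P ps' \<longrightarrow> length ps' \<le> length ps"
    using ex_has_greatest_nat[of P ps0 length "card (verts t) + 1", OF P0 bnd] by blast
  have ps: "is_path t ps" "hd ps \<noteq> last ps" using psP unfolding P_def by auto
  obtain qs p l where pql: "ps = qs @ [p, l]" using path_len2 ps by blast
  have "consec ps p l" using pql by (simp add: consec_append)
  then have "adj t p l" using ps(1) unfolding is_path_consec by blast
  then have adjpl: "adj t l p" using adj_sym[of t p l] by simp
  have lv: "l \<in> verts t" using adj_verts[OF wf adjpl] by simp
  have lastps: "last ps = l" "ps \<noteq> []" using pql by auto
  have dps: "distinct ps" "set ps \<subseteq> verts t" using ps unfolding is_path_def by auto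
  have "\<forall>q. adj t l q \<longrightarrow> q = p"
  proof (intro allI impI)
    fix q assume lq: "adj t l q"
    have qv: "q \<in> verts t" "q \<noteq> l" using adj_verts[OF wf lq] by auto
    show "q = p"
    proof (rule ccontr)
      assume qp: "q \<noteq> p"
      show False
      proof (cases "q \<in> set ps")
        case False
        have "\<forall>x y. consec (ps @ [q]) x y \<longrightarrow> adj t x y"
        proof (intro allI impI)
          fix x y assume "consec (ps @ [q]) x y"
          then have "consec ps x y \<or> (x = l \<and> y = q)" using lastps by (simp add: consec_append)
          then show "adj t x y" using ps(1) lq unfolding is_path_consec by blast
        qed
        moreover have "distinct (ps @ [q])" "set (ps @ [q]) \<subseteq> verts t" using dps False qv by auto
        ultimately have "is_path t (ps @ [q])" unfolding is_path_consec by simp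
        moreover have "hd (ps @ [q]) \<noteq> last (ps @ [q])" using False lastps hd_in_set[of ps] by (auto simp: hd_append)
        ultimately have "P (ps @ [q])" unfolding P_def by simp
        then show False using mx by fastforce
      next
        case True
        then have "q \<in> set qs" using pql qv qp by auto
        then obtain A B where AB: "qs = A @ q # B" by (metis split_list)
        define cs where "cs = q # B @ [p, l]"
        have pscs: "ps = A @ cs" using pql AB cs_def by simp
        have "is_cycle t cs" unfolding is_cycle_consec
        proof (intro conjI allI impI)
          show "3 \<le> length cs" unfolding cs_def by simp
          show "distinct cs" using dps pscs by simp
          show "set cs \<subseteq> verts t" using dps pscs by auto
          fix x y assume "consec (cs @ [hd cs]) x y"
          moreover have "cs @ [hd cs] = cs @ [q]" "last cs = l" "cs \<noteq> []" unfolding cs_def by simp_all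
          ultimately have "consec cs x y \<or> (x = l \<and> y = q)" using consec_append[of cs "[q]" x y] by simp
          moreover have "consec cs x y \<Longrightarrow> consec ps x y"
            using pscs by (simp add: consec_append)
          ultimately show "adj t x y" using ps(1) lq unfolding is_path_consec by blast
        qed
        then show False using t unfolding is_tree_def by blast
      qed
    qed
  qed
  then show ?thesis using lv adjpl by blast
qed

lemma leaf_not_inner:
  assumes "is_path t ps" "l \<in> set ps" "hd ps \<noteq> l" "last ps \<noteq> l" "\<forall>q. adj t l q \<longrightarrow> q = p"
  shows False
proof -
  obtain A B where AB: "ps = A @ l # B" using assms(2) by (metis split_list)
  have "A \<noteq> []" "B \<noteq> []" using assms(3,4) AB by auto
  then have "consec ps (last A) l" "consec ps l (hd B)" using AB by (auto simp: consec_append consec_Cons)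
  then have "adj t (last A) l" "adj t l (hd B)" using assms(1) unfolding is_path_consec by blast+
  then have "last A = p" "hd B = p" using assms(5) adj_sym[of t "last A" l] by auto
  moreover have "last A \<in> set A" "hd B \<in> set B" using \<open>A \<noteq> []\<close> \<open>B \<noteq> []\<close> by auto
  moreover have "distinct ps" using assms(1) unfolding is_path_def by simp
  ultimately show False using AB by auto
qed

lemma tree_del_leaf:
  assumes t: "is_tree t" and c: "2 \<le> card (verts t)" and l: "l \<in> verts t" "\<forall>q. adj t l q \<longrightarrow> q = p"
  shows "is_tree (ind t (verts t - {l}))"
  unfolding is_tree_def
proof (intro conjI)
  have wf: "wf_graph t" using t unfolding is_tree_def by simp
  show "wf_graph (ind t (verts t - {l}))" by (rule wf_ind[OF wf]) auto
  show "verts (ind t (verts t - {l})) \<noteq> {}"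
  proof
    assume "verts (ind t (verts t - {l})) = {}"
    then have "verts t \<subseteq> {l}" by auto
    then have "card (verts t) \<le> card {l}" by (rule card_mono[rotated]) simp
    then show False using c by simp
  qed
  show "\<nexists>cs. is_cycle (ind t (verts t - {l})) cs" using t cycle_ind[of "verts t - {l}" t] unfolding is_tree_def by blast
  show "connected_graph (ind t (verts t - {l}))" unfolding connected_graph_def verts_ind
  proof (intro ballI)
    fix u w assume uw: "u \<in> verts t - {l}" "w \<in> verts t - {l}"
    then obtain ps where ps: "is_path t ps" "hd ps = u" "last ps = w"
      using t unfolding is_tree_def connected_graph_def by blast
    have "l \<notin> set ps" using leaf_not_inner[OF ps(1) _ _ _ l(2)] ps uw by blast
    moreover have "set ps \<subseteq> verts t" using ps(1) unfolding is_path_def by simp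
    ultimately have "is_path (ind t (verts t - {l})) ps" using ps(1) path_ind_iff[of "verts t - {l}" t ps] by auto
    then show "\<exists>ps. is_path (ind t (verts t - {l})) ps \<and> hd ps = u \<and> last ps = w" using ps by blast
  qed
qed

lemma leaf_path:
  assumes "is_path t ps" "hd ps = l" "last ps \<noteq> l" "adj t l p" "\<forall>q. adj t l q \<longrightarrow> q = p"
  shows "p \<in> set ps"
proof -
  obtain rest where r: "ps = l # rest" using assms(1,2) unfolding is_path_def by (cases ps) auto
  have "rest \<noteq> []" using r assms(3) by auto
  then have "consec ps l (hd rest)" using r by (simp add: consec_Cons)
  then have "adj t l (hd rest)" using assms(1) unfolding is_path_consec by blast
  then have "hd rest = p" using assms(5) by blast
  then show ?thesis using r \<open>rest \<noteq> []\<close> by auto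
qed

lemma helly:
  "is_tree t \<Longrightarrow> (\<forall>u\<in>verts t. \<forall>v\<in>verts t. \<forall>w\<in>verts t. on_path t u v w \<longrightarrow> \<beta> u \<inter> \<beta> w \<subseteq> \<beta> v)
   \<Longrightarrow> (\<forall>x\<in>K. \<forall>y\<in>K. \<exists>v\<in>verts t. x \<in> \<beta> v \<and> y \<in> \<beta> v) \<Longrightarrow> \<exists>v\<in>verts t. K \<subseteq> \<beta> v"
proof (induction "card (verts t)" arbitrary: t rule: less_induct)
  case less
  note t = less.prems(1) and pc = less.prems(2) and pr = less.prems(3)
  have wf: "wf_graph t" and fin: "finite (verts t)" and ne: "verts t \<noteq> {}" using t unfolding is_tree_def wf_graph_def by auto
  show ?case
  proof (cases "2 \<le> card (verts t)")
    case False
    then have "card (verts t) \<le> 1" by simp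
    moreover have "card (verts t) \<noteq> 0" using fin ne by simp
    ultimately have "card (verts t) = Suc 0" by simp
    then obtain v where v: "verts t = {v}" unfolding card_Suc_eq by blast
    have "K \<subseteq> \<beta> v"
    proof
      fix x assume "x \<in> K"
      then obtain w where "w \<in> verts t" "x \<in> \<beta> w" using pr by blast
      then show "x \<in> \<beta> v" using v by simp
    qed
    then show ?thesis using v by blast
  next
    case True
    obtain l p where lp: "l \<in> verts t" "adj t l p" "\<forall>q. adj t l q \<longrightarrow> q = p" using leaf_exists[OF t True] by blast
    show ?thesis
    proof (cases "K \<subseteq> \<beta> l")
      case True then show ?thesis using lp by blast
    next
      case False
      then obtain z where z: "z \<in> K" "z \<notin> \<beta> l" by blast
      have pv: "p \<in> verts t" "p \<noteq> l" using adj_verts[OF wf lp(2)] by auto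
      have Kl: "K \<inter> \<beta> l \<subseteq> \<beta> p"
      proof
        fix x assume x: "x \<in> K \<inter> \<beta> l"
        obtain v' where v': "v' \<in> verts t" "x \<in> \<beta> v'" "z \<in> \<beta> v'" using pr x z by blast
        have vl: "v' \<noteq> l" using v' z by blast
        obtain ps where ps: "is_path t ps" "hd ps = l" "last ps = v'"
          using t v'(1) lp(1) unfolding is_tree_def connected_graph_def by blast
        have "p \<in> set ps" using leaf_path[OF ps(1,2) _ lp(2,3)] ps(3) vl by simp
        then have op: "on_path t l p v'" unfolding on_path_def using ps by blast
        have "\<beta> l \<inter> \<beta> v' \<subseteq> \<beta> p" using pc lp(1) pv(1) v'(1) op by blast
        then show "x \<in> \<beta> p" using x v' by blast
      qed
      define t' where "t' = ind t (verts t - {l})"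
      have t': "is_tree t'" unfolding t'_def by (rule tree_del_leaf[OF t True lp(1,3)])
      have vt': "verts t' = verts t - {l}" unfolding t'_def by simp
      have c': "card (verts t') < card (verts t)" unfolding vt' using card_Diff1_less[OF fin lp(1)] .
      have pc': "\<forall>u\<in>verts t'. \<forall>v\<in>verts t'. \<forall>w\<in>verts t'. on_path t' u v w \<longrightarrow> \<beta> u \<inter> \<beta> w \<subseteq> \<beta> v"
      proof (intro ballI impI)
        fix u v w assume uvw: "u \<in> verts t'" "v \<in> verts t'" "w \<in> verts t'" and o: "on_path t' u v w"
        have "on_path t u v w" using on_path_ind[of "verts t - {l}" t u v w] o unfolding t'_def by auto
        then show "\<beta> u \<inter> \<beta> w \<subseteq> \<beta> v" using pc uvw vt' by blast
      qed
      have pr': "\<forall>x\<in>K. \<forall>y\<in>K. \<exists>v\<in>verts t'. x \<in> \<beta> v \<and> y \<in> \<beta> v"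
      proof (intro ballI)
        fix x y assume xy: "x \<in> K" "y \<in> K"
        then obtain v where v: "v \<in> verts t" "x \<in> \<beta> v" "y \<in> \<beta> v" using pr by blast
        show "\<exists>v\<in>verts t'. x \<in> \<beta> v \<and> y \<in> \<beta> v"
        proof (cases "v = l")
          case True
          then have "x \<in> \<beta> p" "y \<in> \<beta> p" using Kl v xy by auto
          then show ?thesis using pv vt' by auto
        next
          case False then show ?thesis using v vt' by auto
        qed
      qed
      have "\<exists>v\<in>verts t'. K \<subseteq> \<beta> v" by (rule less.hyps[OF c' t' pc' pr'])
      then show ?thesis using vt' by auto
    qed
  qed
qed


definition add_leaf :: "'b graph \<Rightarrow> 'b \<Rightarrow> 'b \<Rightarrow> 'b graph" where
  "add_leaf t u n = (insert n (verts t), insert {u,n} (edges t))"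

lemma verts_add_leaf[simp]: "verts (add_leaf t u n) = insert n (verts t)"
  by (simp add: add_leaf_def verts_def)
lemma edges_add_leaf[simp]: "edges (add_leaf t u n) = insert {u,n} (edges t)"
  by (simp add: add_leaf_def edges_def)

lemma adj_add_leaf: "adj (add_leaf t u n) a b \<longleftrightarrow> adj t a b \<or> {a,b} = {u,n}"
  by (auto simp: adj_def)

lemma nbr_new:
  assumes wf: "wf_graph t" and n: "n \<notin> verts t" and un: "u \<noteq> n" and a: "adj (add_leaf t u n) n y"
  shows "y = u"
proof -
  have "adj t n y \<or> {n,y} = {u,n}" using a adj_add_leaf by metis
  moreover have "\<not> adj t n y" using adj_verts[OF wf] n by blast
  ultimately have "{n,y} = {u,n}" by blast
  then show "y = u" using un by (metis doubleton_eq_iff)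
qed

lemma path_add_leaf: "is_path t ps \<Longrightarrow> is_path (add_leaf t u n) ps"
  unfolding is_path_consec by (auto simp: adj_add_leaf)

lemma path_add_leaf_back:
  assumes "is_path (add_leaf t u n) ps" "n \<notin> set ps"
  shows "is_path t ps"
  unfolding is_path_consec
proof (intro conjI allI impI)
  show "ps \<noteq> []" "distinct ps" using assms(1) unfolding is_path_def by auto
  show "set ps \<subseteq> verts t" using assms unfolding is_path_def by auto
  fix a b assume c: "consec ps a b"
  then have "adj t a b \<or> {a,b} = {u,n}" using assms(1) adj_add_leaf unfolding is_path_consec by metis
  moreover have "a \<noteq> n" "b \<noteq> n" using consec_set[OF c] assms(2) by auto
  ultimately show "adj t a b" by auto
qed

lemma cycle_two_nbrs:
  assumes c: "is_cycle g cs" and x: "x \<in> set cs"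
  shows "\<exists>y z. y \<noteq> z \<and> adj g x y \<and> adj g x z"
proof -
  have cc: "3 \<le> length cs" "distinct cs" "\<forall>u v. consec (cs @ [hd cs]) u v \<longrightarrow> adj g u v"
    using c unfolding is_cycle_consec by auto
  obtain A B where AB: "cs = A @ x # B" using x by (metis split_list)
  have e: "cs @ [hd cs] = A @ x # (B @ [hd cs])" using AB by simp
  show ?thesis
  proof (cases "A = []")
    case True
    then have B2: "2 \<le> length B" using cc AB by simp
    then have Bne: "B \<noteq> []" by auto
    have hd: "hd cs = x" using AB True by simp
    have "consec (cs @ [hd cs]) x (hd B)" using e True Bne by (simp add: consec_Cons)
    moreover have "consec (cs @ [hd cs]) (last B) x"
    proof -
      have "cs @ [hd cs] = (x # B) @ [x]" using AB True hd by simp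
      moreover have "last (x # B) = last B" using Bne by simp
      ultimately show ?thesis using consec_append[of "x # B" "[x]" "last B" x] by simp
    qed
    moreover have "hd B \<noteq> last B"
    proof
      assume h: "hd B = last B"
      obtain b1 B' where "B = b1 # B'" using Bne by (cases B) auto
      moreover have "B' \<noteq> []" using B2 calculation by auto
      ultimately show False using h cc(2) AB by (auto simp: last_in_set)
    qed
    ultimately show ?thesis using cc(3) adj_sym[of g "last B" x] by metis
  next
    case Ane: False
    show ?thesis
    proof (cases "B = []")
      case True
      then have A2: "2 \<le> length A" using cc AB by simp
      have hd: "hd cs = hd A" using AB Ane by simp
      have "consec (cs @ [hd cs]) (last A) x" using e Ane by (simp add: consec_append)
      moreover have "consec (cs @ [hd cs]) x (hd A)" using e True hd by (simp add: consec_append)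
      moreover have "hd A \<noteq> last A"
      proof
        assume h: "hd A = last A"
        obtain a1 A' where "A = a1 # A'" using Ane by (cases A) auto
        moreover have "A' \<noteq> []" using A2 calculation by auto
        ultimately show False using h cc(2) AB by (auto simp: last_in_set)
      qed
      ultimately show ?thesis using cc(3) adj_sym[of g "last A" x] by metis
    next
      case Bne: False
      have "consec (cs @ [hd cs]) (last A) x" using e Ane by (simp add: consec_append)
      moreover have "consec (cs @ [hd cs]) x (hd B)" using e Bne by (simp add: consec_append consec_Cons)
      moreover have "last A \<noteq> hd B" using cc(2) AB last_in_set[OF Ane] hd_in_set[OF Bne] by auto
      ultimately show ?thesis using cc(3) adj_sym[of g "last A" x] by metis
    qed
  qed
qed

lemma tree_add_leaf:
  assumes t: "is_tree t" and u: "u \<in> verts t" and n: "n \<notin> verts t"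
  shows "is_tree (add_leaf t u n)"
  unfolding is_tree_def
proof (intro conjI)
  have wf: "wf_graph t" using t unfolding is_tree_def by simp
  have un: "u \<noteq> n" using u n by blast
  show "wf_graph (add_leaf t u n)" unfolding wf_graph_def
  proof (intro conjI)
    show "finite (verts (add_leaf t u n))" using wf unfolding wf_graph_def by simp
    show "\<forall>e\<in>edges (add_leaf t u n). e \<subseteq> verts (add_leaf t u n) \<and> card e = 2"
    proof
    fix e assume "e \<in> edges (add_leaf t u n)"
    then have "e = {u,n} \<or> e \<in> edges t" by simp
    then show "e \<subseteq> verts (add_leaf t u n) \<and> card e = 2"
    proof
      assume "e = {u,n}" then show ?thesis using u un by simp
    next
      assume "e \<in> edges t" then show ?thesis using wf unfolding wf_graph_def by auto
    qed
    qed
  qed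
  show "verts (add_leaf t u n) \<noteq> {}" by simp
  show "\<nexists>cs. is_cycle (add_leaf t u n) cs"
  proof
    assume "\<exists>cs. is_cycle (add_leaf t u n) cs"
    then obtain cs where cs: "is_cycle (add_leaf t u n) cs" by blast
    show False
    proof (cases "n \<in> set cs")
      case True
      then obtain y z where yz: "y \<noteq> z" "adj (add_leaf t u n) n y" "adj (add_leaf t u n) n z"
        using cycle_two_nbrs[OF cs] by blast
      have "y = u" by (rule nbr_new[OF wf n un yz(2)])
      moreover have "z = u" by (rule nbr_new[OF wf n un yz(3)])
      ultimately show False using yz(1) by simp
    next
      case False
      have "is_cycle t cs" unfolding is_cycle_consec
      proof (intro conjI allI impI)
        show "3 \<le> length cs" "distinct cs" using cs unfolding is_cycle_def by auto
        show "set cs \<subseteq> verts t" using cs False unfolding is_cycle_def by auto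
        fix a b assume c: "consec (cs @ [hd cs]) a b"
        then have "adj t a b \<or> {a,b} = {u,n}" using cs adj_add_leaf unfolding is_cycle_consec by metis
        moreover have "set (cs @ [hd cs]) = set cs" using cs unfolding is_cycle_def by (cases cs) auto
        then have "a \<noteq> n" "b \<noteq> n" using consec_set[OF c] False by auto
        ultimately show "adj t a b" by auto
      qed
      then show False using t unfolding is_tree_def by blast
    qed
  qed
  show "connected_graph (add_leaf t u n)" unfolding connected_graph_def
  proof (intro ballI)
    fix a b assume a: "a \<in> verts (add_leaf t u n)" and b: "b \<in> verts (add_leaf t u n)"
    have conn: "\<forall>a\<in>verts t. \<forall>b\<in>verts t. \<exists>ps. is_path t ps \<and> hd ps = a \<and> last ps = b"
      using t unfolding is_tree_def connected_graph_def by blast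
    have ext: "\<exists>ps. is_path (add_leaf t u n) ps \<and> hd ps = n \<and> last ps = w" if w: "w \<in> verts t" for w
    proof -
      obtain ps where ps: "is_path t ps" "hd ps = u" "last ps = w" using conn u w by blast
      have pne: "ps \<noteq> []" using ps unfolding is_path_def by simp
      have "n \<notin> set ps" using ps n unfolding is_path_def by auto
      moreover have nu: "adj (add_leaf t u n) n u" by (simp add: adj_add_leaf insert_commute)
      moreover have pp: "is_path (add_leaf t u n) ps" by (rule path_add_leaf[OF ps(1)])
      ultimately have "is_path (add_leaf t u n) (n # ps)" unfolding is_path_consec
      proof (intro conjI allI impI)
        show "n # ps \<noteq> []" by simp
        show "distinct (n # ps)" using \<open>n \<notin> set ps\<close> pp unfolding is_path_def by simp
        show "set (n # ps) \<subseteq> verts (add_leaf t u n)" using pp unfolding is_path_def by auto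
        fix x y assume "consec (n # ps) x y"
        then have "(x = n \<and> y = u) \<or> consec ps x y" using pne ps(2) by (auto simp: consec_Cons)
        then show "adj (add_leaf t u n) x y" using nu pp unfolding is_path_consec by blast
      qed
      then show ?thesis using ps pne by (intro exI[of _ "n # ps"]) auto
    qed
    show "\<exists>ps. is_path (add_leaf t u n) ps \<and> hd ps = a \<and> last ps = b"
    proof (cases "a = n")
      case True
      show ?thesis
      proof (cases "b = n")
        case True
        have "is_path (add_leaf t u n) [n]" unfolding is_path_def by simp
        then show ?thesis using \<open>a = n\<close> True by (intro exI[of _ "[n]"]) auto
      next
        case False
        then have "b \<in> verts t" using b by simp
        then show ?thesis using ext \<open>a = n\<close> by blast
      qed
    next
      case anotn: False
      show ?thesis
      proof (cases "b = n")
        case True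
        have "a \<in> verts t" using a anotn by simp
        then obtain ps where ps: "is_path (add_leaf t u n) ps" "hd ps = n" "last ps = a" using ext by blast
        have "ps \<noteq> []" using ps unfolding is_path_def by simp
        then show ?thesis using path_rev[OF ps(1)] ps True by (intro exI[of _ "rev ps"]) (auto simp: hd_rev last_rev)
      next
        case False
        have "a \<in> verts t" "b \<in> verts t" using a b anotn False by auto
        then obtain ps where ps: "is_path t ps" "hd ps = a" "last ps = b" using conn by blast
        have "is_path (add_leaf t u n) ps" by (rule path_add_leaf[OF ps(1)])
        then show ?thesis using ps by blast
      qed
    qed
  qed
qed

lemma on_path_sym: "on_path t a v b \<Longrightarrow> on_path t b v a"
  unfolding on_path_def
proof (elim exE conjE)
  fix ps assume ps: "is_path t ps" "hd ps = a" "last ps = b" "v \<in> set ps"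
  then have "ps \<noteq> []" unfolding is_path_def by simp
  then show "\<exists>ps. is_path t ps \<and> hd ps = b \<and> last ps = a \<and> v \<in> set ps"
    using path_rev[OF ps(1)] ps by (intro exI[of _ "rev ps"]) (auto simp: hd_rev last_rev)
qed

lemma on_path_add_leaf_hd:
  assumes wf: "wf_graph t" and n: "n \<notin> verts t" and un: "u \<noteq> n"
    and ps: "is_path (add_leaf t u n) ps" "hd ps = n" "last ps = b" "v \<in> set ps"
  shows "(b = n \<and> v = n) \<or> (b \<noteq> n \<and> (v = n \<or> on_path t u v b))"
proof -
  obtain rest where r: "ps = n # rest" using ps unfolding is_path_def by (cases ps) auto
  show ?thesis
  proof (cases "rest = []")
    case True then show ?thesis using r ps by auto
  next
    case False
    have nr: "n \<notin> set rest" using ps(1) r unfolding is_path_def by auto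
    have "consec ps n (hd rest)" using r False by (simp add: consec_Cons)
    then have "adj (add_leaf t u n) n (hd rest)" using ps(1) unfolding is_path_consec by blast
    then have h: "hd rest = u" using nbr_new[OF wf n un] by blast
    have pr: "is_path (add_leaf t u n) rest" using ps(1) r False unfolding is_path_consec by (auto simp: consec_Cons)
    have "is_path t rest" by (rule path_add_leaf_back[OF pr nr])
    moreover have "last rest = b" using r False ps(3) by simp
    moreover have "b \<noteq> n" using nr calculation(2) False last_in_set by metis
    ultimately show ?thesis using h ps(4) r unfolding on_path_def by auto
  qed
qed

lemma on_path_add_leaf:
  assumes wf: "wf_graph t" and n: "n \<notin> verts t" and un: "u \<noteq> n"
    and o: "on_path (add_leaf t u n) a v b"
  shows "on_path t a v b \<or> (a = n \<and> (v = n \<or> on_path t u v b)) \<or> (b = n \<and> (v = n \<or> on_path t a v u))"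
proof -
  obtain ps where ps: "is_path (add_leaf t u n) ps" "hd ps = a" "last ps = b" "v \<in> set ps"
    using o unfolding on_path_def by blast
  have pne: "ps \<noteq> []" using ps unfolding is_path_def by simp
  show ?thesis
  proof (cases "n \<in> set ps")
    case False
    then have "on_path t a v b" using path_add_leaf_back[OF ps(1) False] ps unfolding on_path_def by blast
    then show ?thesis by blast
  next
    case True
    have "\<forall>q. adj (add_leaf t u n) n q \<longrightarrow> q = u" using nbr_new[OF wf n un] by blast
    then have "a = n \<or> b = n" using leaf_not_inner[OF ps(1) True, of u] ps(2,3) by blast
    then show ?thesis
    proof
      assume "a = n"
      then have "(b = n \<and> v = n) \<or> (b \<noteq> n \<and> (v = n \<or> on_path t u v b))"
        using on_path_add_leaf_hd[OF wf n un ps(1) _ ps(3,4)] ps(2) by blast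
      then show ?thesis using \<open>a = n\<close> by blast
    next
      assume bn: "b = n"
      have "is_path (add_leaf t u n) (rev ps)" "hd (rev ps) = n" "last (rev ps) = a" "v \<in> set (rev ps)"
        using path_rev[OF ps(1)] ps bn pne by (auto simp: hd_rev last_rev)
      then have "(a = n \<and> v = n) \<or> (a \<noteq> n \<and> (v = n \<or> on_path t u v a))"
        using on_path_add_leaf_hd[OF wf n un] by blast
      then show ?thesis
      proof
        assume "a = n \<and> v = n" then show ?thesis using bn by blast
      next
        assume h: "a \<noteq> n \<and> (v = n \<or> on_path t u v a)"
        show ?thesis
        proof (cases "v = n")
          case True then show ?thesis using bn by blast
        next
          case False
          then have "on_path t u v a" using h by blast
          then have "on_path t a v u" by (rule on_path_sym)
          then show ?thesis using bn by blast
        qed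
      qed
    qed
  qed
qed


lemma td_iff: "tree_decomp g (t, \<beta>) \<longleftrightarrow> is_tree t \<and>
     (\<forall>v\<in>verts t. \<beta> v \<subseteq> verts g) \<and>
     (\<forall>x\<in>verts g. \<exists>v\<in>verts t. x \<in> \<beta> v) \<and>
     (\<forall>e\<in>edges g. \<exists>v\<in>verts t. e \<subseteq> \<beta> v) \<and>
     (\<forall>u\<in>verts t. \<forall>v\<in>verts t. \<forall>w\<in>verts t. on_path t u v w \<longrightarrow> \<beta> u \<inter> \<beta> w \<subseteq> \<beta> v)"
  by (simp add: tree_decomp_def)

lemma on_path_verts: "on_path t a v b \<Longrightarrow> a \<in> verts t \<and> v \<in> verts t \<and> b \<in> verts t"
  unfolding on_path_def is_path_def by (auto dest: hd_in_set last_in_set)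

lemma clique_in_bag:
  assumes wf: "wf_graph g" and td: "tree_decomp g (t, \<beta>)" and K: "is_clique g K"
  shows "\<exists>v\<in>verts t. K \<subseteq> \<beta> v"
proof -
  have tt: "is_tree t" and cov: "\<forall>x\<in>verts g. \<exists>v\<in>verts t. x \<in> \<beta> v"
    and ecov: "\<forall>e\<in>edges g. \<exists>v\<in>verts t. e \<subseteq> \<beta> v"
    and pc: "\<forall>u\<in>verts t. \<forall>v\<in>verts t. \<forall>w\<in>verts t. on_path t u v w \<longrightarrow> \<beta> u \<inter> \<beta> w \<subseteq> \<beta> v"
    using td unfolding td_iff by blast+
  have pr: "\<forall>x\<in>K. \<forall>y\<in>K. \<exists>v\<in>verts t. x \<in> \<beta> v \<and> y \<in> \<beta> v"
  proof (intro ballI)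
    fix x y assume xy: "x \<in> K" "y \<in> K"
    show "\<exists>v\<in>verts t. x \<in> \<beta> v \<and> y \<in> \<beta> v"
    proof (cases "x = y")
      case True
      have "x \<in> verts g" using K xy unfolding is_clique_def by blast
      then show ?thesis using cov True by blast
    next
      case False
      then have "adj g x y" using K xy unfolding is_clique_def by blast
      then have "{x,y} \<in> edges g" unfolding adj_def .
      then obtain v where "v \<in> verts t" "{x,y} \<subseteq> \<beta> v" using ecov by blast
      then show ?thesis by blast
    qed
  qed
  show ?thesis by (rule helly[OF tt pc pr])
qed

lemma clique_del: "is_clique (ind g (verts g - {x})) C \<longleftrightarrow> is_clique g C \<and> x \<notin> C"
  unfolding is_clique_def adj_ind by auto

lemma maxN:
  assumes wf: "wf_graph g" and x: "x \<in> verts g" "simplicial g x"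
  shows "insert x {y. adj g x y} \<in> MaxClq g"
proof -
  let ?N = "{y. adj g x y}"
  have cl: "is_clique g (insert x ?N)" unfolding is_clique_def
  proof (intro conjI ballI impI)
    show "insert x ?N \<subseteq> verts g" using x adj_verts[OF wf] by blast
    fix u v assume uv: "u \<in> insert x ?N" "v \<in> insert x ?N" "u \<noteq> v"
    show "adj g u v"
    proof (cases "u = x")
      case True then show ?thesis using uv by simp
    next
      case False
      show ?thesis
      proof (cases "v = x")
        case True then show ?thesis using uv False adj_sym[of g x u] by simp
      next
        case False
        then show ?thesis using uv \<open>u \<noteq> x\<close> x(2) unfolding simplicial_def by blast
      qed
    qed
  qed
  have "\<not> (\<exists>C'. is_clique g C' \<and> insert x ?N \<subset> C')"
  proof
    assume "\<exists>C'. is_clique g C' \<and> insert x ?N \<subset> C'"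
    then obtain C' where C': "is_clique g C'" "insert x ?N \<subset> C'" by blast
    then obtain z where z: "z \<in> C'" "z \<notin> insert x ?N" using psubset_imp_ex_mem by blast
    have xC: "x \<in> C'" using C'(2) by blast
    have zx: "z \<noteq> x" using z(2) by blast
    have "\<forall>u\<in>C'. \<forall>v\<in>C'. u \<noteq> v \<longrightarrow> adj g u v" using C'(1) unfolding is_clique_def by blast
    then have "adj g x z" using xC z(1) zx by metis
    then have "z \<in> ?N" by simp
    then show False using z(2) by blast
  qed
  then show ?thesis using cl unfolding MaxClq_def mem_Collect_eq by blast
qed

lemma maxK:
  assumes wf: "wf_graph g" and x: "x \<in> verts g" "simplicial g x"
    and K: "K \<in> MaxClq (ind g (verts g - {x}))" and KN: "K \<noteq> {y. adj g x y}"
  shows "K \<in> MaxClq g"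
proof -
  let ?N = "{y. adj g x y}"
  let ?g' = "ind g (verts g - {x})"
  have Kin: "is_clique ?g' K \<and> \<not> (\<exists>C'. is_clique ?g' C' \<and> K \<subset> C')" using K unfolding MaxClq_def by simp
  then have Kc: "is_clique g K" "x \<notin> K" using clique_del[of g x K] by simp_all
  have Kmax: "\<not> (\<exists>C'. is_clique ?g' C' \<and> K \<subset> C')" using Kin by simp
  have NV: "?N \<subseteq> verts g"
  proof
    fix y assume "y \<in> ?N"
    then have "adj g x y" by simp
    from adj_verts[OF wf this] show "y \<in> verts g" by simp
  qed
  have xN: "x \<notin> ?N"
  proof
    assume "x \<in> ?N"
    then have "adj g x x" by simp
    from adj_verts[OF wf this] show False by simp
  qed
  have "\<forall>u\<in>?N. \<forall>v\<in>?N. u \<noteq> v \<longrightarrow> adj g u v"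
  proof (intro ballI impI)
    fix u v assume "u \<in> ?N" "v \<in> ?N" "u \<noteq> v"
    then have "adj g x u" "adj g x v" "u \<noteq> v" by simp_all
    then show "adj g u v" using x(2) unfolding simplicial_def by blast
  qed
  then have "is_clique g ?N" unfolding is_clique_def using NV by blast
  then have Ncl: "is_clique ?g' ?N" using clique_del[of g x ?N] xN by simp
  have "\<not> (\<exists>C'. is_clique g C' \<and> K \<subset> C')"
  proof
    assume "\<exists>C'. is_clique g C' \<and> K \<subset> C'"
    then obtain C' where C': "is_clique g C'" "K \<subset> C'" by blast
    show False
    proof (cases "x \<in> C'")
      case False
      then have "is_clique ?g' C'" using C'(1) clique_del[of g x C'] by simp
      then show False using Kmax C'(2) by blast
    next
      case True
      have cc: "\<forall>u\<in>C'. \<forall>v\<in>C'. u \<noteq> v \<longrightarrow> adj g u v" using C'(1) unfolding is_clique_def by blast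
      have "K \<subseteq> ?N"
      proof
        fix k assume k: "k \<in> K"
        have kx: "x \<noteq> k" using Kc(2) k by metis
        have kC: "k \<in> C'" using k C'(2) by blast
        have "adj g x k" using cc True kC kx by metis
        then show "k \<in> ?N" by simp
      qed
      then have "K \<subset> ?N" using KN by (simp add: psubset_eq)
      then show False using Kmax Ncl by blast
    qed
  qed
  then have "is_clique g K \<and> \<not> (\<exists>C'. is_clique g C' \<and> K \<subset> C')" using Kc(1) by simp
  then show ?thesis unfolding MaxClq_def by simp
qed

lemma edge_x:
  assumes wf: "wf_graph g" and e: "e \<in> edges g" "x \<in> e"
  shows "e \<subseteq> insert x {y. adj g x y}"
proof -
  have "card e = 2" using wf e unfolding wf_graph_def by blast
  then obtain a b where ab: "e = {a,b}" "a \<noteq> b" by (metis card_2_iff)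
  show ?thesis
  proof (cases "a = x")
    case True
    then have "adj g x b" using e ab unfolding adj_def by simp
    then show ?thesis using ab True by auto
  next
    case False
    then have "b = x" using e ab by auto
    then have "adj g x a" using e ab unfolding adj_def by (simp add: insert_commute)
    then show ?thesis using ab \<open>b = x\<close> by auto
  qed
qed

lemma base_tree: "is_tree ({0::nat}, {})"
  unfolding is_tree_def
proof (intro conjI)
  show "wf_graph ({0::nat}, {})" unfolding wf_graph_def verts_def edges_def by simp
  show "verts ({0::nat}, {}) \<noteq> {}" unfolding verts_def by simp
  show "connected_graph ({0::nat}, {})" unfolding connected_graph_def
  proof (intro ballI)
    fix u w assume "u \<in> verts ({0::nat}, {})" "w \<in> verts ({0::nat}, {})"
    then have "u = 0" "w = 0" unfolding verts_def by auto
    moreover have "is_path ({0::nat}, {}) [0]" unfolding is_path_def verts_def by simp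
    ultimately show "\<exists>ps. is_path ({0::nat}, {}) ps \<and> hd ps = u \<and> last ps = w" by (intro exI[of _ "[0]"]) simp
  qed
  show "\<nexists>cs. is_cycle ({0::nat}, {}) cs"
  proof
    assume "\<exists>cs. is_cycle ({0::nat}, {}) cs"
    then obtain cs where cs: "is_cycle ({0::nat}, {}) cs" by blast
    then have d: "distinct cs" "set cs \<subseteq> {0}" "3 \<le> length cs" unfolding is_cycle_def verts_def by auto
    have "length cs = card (set cs)" using d(1) by (simp add: distinct_card)
    also have "\<dots> \<le> card {0::nat}" by (rule card_mono[OF _ d(2)]) simp
    finally show False using d(3) by simp
  qed
qed

lemma clique_tree:
  "wf_graph g \<Longrightarrow> chordal g \<Longrightarrow> \<exists>t (\<beta> :: nat \<Rightarrow> 'a set). tree_decomp g (t, \<beta>) \<and> \<beta> ` verts t \<subseteq> MaxClq g"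
proof (induction "card (verts g)" arbitrary: g rule: less_induct)
  case less
  note wf = less.prems(1) and ch = less.prems(2)
  have finV: "finite (verts g)" using wf unfolding wf_graph_def by simp
  show ?case
  proof (cases "verts g = {}")
    case True
    define \<beta> where "\<beta> = (\<lambda>v::nat. {} :: 'a set)"
    have noedge: "edges g = {}"
    proof -
      have "\<forall>e\<in>edges g. e \<subseteq> verts g \<and> card e = 2" using wf unfolding wf_graph_def by blast
      then show ?thesis using True by fastforce
    qed
    have "tree_decomp g (({0::nat}, {}), \<beta>)" unfolding td_iff
      using base_tree True noedge unfolding \<beta>_def by simp
    moreover have "{} \<in> MaxClq g" unfolding MaxClq_def is_clique_def using True by auto
    then have "\<beta> ` verts ({0::nat}, {}) \<subseteq> MaxClq g" unfolding \<beta>_def verts_def by simp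
    ultimately show ?thesis by blast
  next
    case False
    obtain x where x: "x \<in> verts g" "simplicial g x" using simplicial_exists[OF wf ch False] by blast
    define W where "W = verts g - {x}"
    define g' where "g' = ind g W"
    have WV: "W \<subseteq> verts g" unfolding W_def by blast
    have vg': "verts g' = W" unfolding g'_def by simp
    have c': "card (verts g') < card (verts g)" unfolding vg' W_def using card_Diff1_less[OF finV x(1)] .
    obtain t and \<beta> :: "nat \<Rightarrow> 'a set" where IH: "tree_decomp g' (t, \<beta>)" "\<beta> ` verts t \<subseteq> MaxClq g'"
      using less.hyps[OF c' wf_ind[OF wf WV, folded g'_def] chordal_ind[OF ch WV, folded g'_def]] by blast
    note TD = IH(1)[unfolded td_iff vg']
    note tt = TD[THEN conjunct1]
    note bsub = TD[THEN conjunct2, THEN conjunct1]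
    note cov = TD[THEN conjunct2, THEN conjunct2, THEN conjunct1]
    note ecov = TD[THEN conjunct2, THEN conjunct2, THEN conjunct2, THEN conjunct1]
    note pc = TD[THEN conjunct2, THEN conjunct2, THEN conjunct2, THEN conjunct2]
    have wft: "wf_graph t" using tt unfolding is_tree_def by simp
    define N where "N = {y. adj g x y}"
    have NW: "N \<subseteq> W"
    proof
      fix y assume "y \<in> N"
      then have "adj g x y" unfolding N_def by simp
      from adj_verts[OF wf this] have "y \<in> verts g" "y \<noteq> x" by auto
      then show "y \<in> W" unfolding W_def by simp
    qed
    have xN: "x \<notin> N" using NW W_def by blast
    have "is_clique g N" unfolding is_clique_def
    proof (intro conjI ballI impI)
      show "N \<subseteq> verts g" using NW WV by blast
      fix u v assume "u \<in> N" "v \<in> N" "u \<noteq> v"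
      then have "adj g x u" "adj g x v" "u \<noteq> v" unfolding N_def by simp_all
      then show "adj g u v" using x(2) unfolding simplicial_def by blast
    qed
    then have Ncl: "is_clique g' N" unfolding g'_def W_def using clique_del[of g x N] xN by simp
    obtain u where u: "u \<in> verts t" "N \<subseteq> \<beta> u"
      using clique_in_bag[OF wf_ind[OF wf WV] IH(1)[unfolded g'_def] Ncl[unfolded g'_def]] by blast
    have maxN': "insert x N \<in> MaxClq g" unfolding N_def by (rule maxN[OF wf x])
    have maxK': "K \<in> MaxClq g" if "K \<in> MaxClq g'" "K \<noteq> N" for K
      using maxK[OF wf x, of K] that unfolding g'_def W_def N_def by blast
    have bmax: "\<beta> v \<in> MaxClq g'" if "v \<in> verts t" for v using IH(2) that by blast
    have bcl: "is_clique g' (\<beta> v) \<and> \<not> (\<exists>C'. is_clique g' C' \<and> \<beta> v \<subset> C')" if "v \<in> verts t" for v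
      using bmax[OF that] unfolding MaxClq_def by blast
    have xW: "x \<notin> W" unfolding W_def by blast
    have edges_g': "e \<in> edges g'" if "e \<in> edges g" "x \<notin> e" for e
    proof -
      have "e \<subseteq> verts g" using wf that unfolding wf_graph_def by blast
      then show ?thesis using that unfolding g'_def W_def by auto
    qed
    have insV: "insert x N \<subseteq> verts g" using x(1) NW WV by blast
    show ?thesis
    proof (cases "\<beta> u = N")
      case True
      define \<beta>' where "\<beta>' = (\<lambda>v. if \<beta> v = N then insert x N else \<beta> v)"
      have "tree_decomp g (t, \<beta>')" unfolding td_iff
      proof (intro conjI)
        show "is_tree t" by (rule tt)
        show "\<forall>v\<in>verts t. \<beta>' v \<subseteq> verts g" using bsub WV insV unfolding \<beta>'_def by auto
        show "\<forall>y\<in>verts g. \<exists>v\<in>verts t. y \<in> \<beta>' v"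
        proof
          fix y assume y: "y \<in> verts g"
          show "\<exists>v\<in>verts t. y \<in> \<beta>' v"
          proof (cases "y = x")
            case True then show ?thesis using u \<open>\<beta> u = N\<close> unfolding \<beta>'_def by auto
          next
            case False
            then obtain v where "v \<in> verts t" "y \<in> \<beta> v" using cov y unfolding W_def by blast
            then show ?thesis unfolding \<beta>'_def by (intro bexI[of _ v]) auto
          qed
        qed
        show "\<forall>e\<in>edges g. \<exists>v\<in>verts t. e \<subseteq> \<beta>' v"
        proof
          fix e assume e: "e \<in> edges g"
          show "\<exists>v\<in>verts t. e \<subseteq> \<beta>' v"
          proof (cases "x \<in> e")
            case True
            then have "e \<subseteq> insert x N" using edge_x[OF wf e] unfolding N_def by blast
            then show ?thesis using u \<open>\<beta> u = N\<close> unfolding \<beta>'_def by auto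
          next
            case False
            then obtain v where "v \<in> verts t" "e \<subseteq> \<beta> v" using ecov edges_g'[OF e] by blast
            then show ?thesis unfolding \<beta>'_def by (intro bexI[of _ v]) auto
          qed
        qed
        show "\<forall>a\<in>verts t. \<forall>v\<in>verts t. \<forall>b\<in>verts t. on_path t a v b \<longrightarrow> \<beta>' a \<inter> \<beta>' b \<subseteq> \<beta>' v"
        proof (intro ballI impI subsetI)
          fix a v b y assume abv: "a \<in> verts t" "v \<in> verts t" "b \<in> verts t" and o: "on_path t a v b"
            and y: "y \<in> \<beta>' a \<inter> \<beta>' b"
          have p: "\<beta> a \<inter> \<beta> b \<subseteq> \<beta> v" using pc abv o by blast
          show "y \<in> \<beta>' v"
          proof (cases "y = x")
            case True
            have "x \<notin> \<beta> a" "x \<notin> \<beta> b" using bsub abv xW by blast+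
            then have "\<beta> a = N" "\<beta> b = N" using y True unfolding \<beta>'_def by (auto split: if_splits)
            then have "N \<subseteq> \<beta> v" using p by blast
            moreover have "\<not> N \<subset> \<beta> v"
            proof
              assume "N \<subset> \<beta> v"
              then show False using bcl[OF u(1)] bcl[OF abv(2)] \<open>\<beta> u = N\<close> by metis
            qed
            ultimately have "\<beta> v = N" by blast
            then show ?thesis using True unfolding \<beta>'_def by simp
          next
            case False
            have "y \<in> \<beta> a" "y \<in> \<beta> b" using y False unfolding \<beta>'_def by (auto split: if_splits)
            then have "y \<in> \<beta> v" using p by blast
            then show ?thesis unfolding \<beta>'_def by auto
          qed
        qed
      qed
      moreover have "\<beta>' ` verts t \<subseteq> MaxClq g"
      proof
        fix B assume "B \<in> \<beta>' ` verts t"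
        then obtain v where v: "v \<in> verts t" "B = \<beta>' v" by blast
        show "B \<in> MaxClq g"
        proof (cases "\<beta> v = N")
          case True then show ?thesis using v maxN' unfolding \<beta>'_def by simp
        next
          case False then show ?thesis using v maxK'[OF bmax[OF v(1)]] unfolding \<beta>'_def by simp
        qed
      qed
      ultimately show ?thesis by blast
    next
      case False
      then have NsubU: "N \<subset> \<beta> u" using u by blast
      have notN: "\<beta> v \<noteq> N" if "v \<in> verts t" for v
      proof
        assume "\<beta> v = N"
        then show False using bcl[OF that] bcl[OF u(1)] NsubU by metis
      qed
      have fint: "finite (verts t)" using wft unfolding wf_graph_def by simp
      define n where "n = Suc (Max (verts t))"
      have n: "n \<notin> verts t"
      proof
        assume "n \<in> verts t"
        then have "n \<le> Max (verts t)" using Max_ge[OF fint] by blast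
        then show False unfolding n_def by simp
      qed
      have un: "u \<noteq> n" using u n by blast
      define t' where "t' = add_leaf t u n"
      define \<beta>' where "\<beta>' = \<beta>(n := insert x N)"
      have b'old: "\<beta>' v = \<beta> v" if "v \<in> verts t" for v using that n unfolding \<beta>'_def by auto
      have b'n: "\<beta>' n = insert x N" unfolding \<beta>'_def by simp
      have "tree_decomp g (t', \<beta>')" unfolding td_iff
      proof (intro conjI)
        show "is_tree t'" unfolding t'_def by (rule tree_add_leaf[OF tt u(1) n])
        show "\<forall>v\<in>verts t'. \<beta>' v \<subseteq> verts g" using bsub WV insV b'old b'n unfolding t'_def by auto
        show "\<forall>y\<in>verts g. \<exists>v\<in>verts t'. y \<in> \<beta>' v"
        proof
          fix y assume y: "y \<in> verts g"
          show "\<exists>v\<in>verts t'. y \<in> \<beta>' v"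
          proof (cases "y = x")
            case True then show ?thesis using b'n unfolding t'_def by auto
          next
            case False
            then obtain v where "v \<in> verts t" "y \<in> \<beta> v" using cov y unfolding W_def by blast
            then show ?thesis using b'old unfolding t'_def by auto
          qed
        qed
        show "\<forall>e\<in>edges g. \<exists>v\<in>verts t'. e \<subseteq> \<beta>' v"
        proof
          fix e assume e: "e \<in> edges g"
          show "\<exists>v\<in>verts t'. e \<subseteq> \<beta>' v"
          proof (cases "x \<in> e")
            case True
            then have "e \<subseteq> insert x N" using edge_x[OF wf e] unfolding N_def by blast
            then show ?thesis using b'n unfolding t'_def by auto
          next
            case False
            then obtain v where "v \<in> verts t" "e \<subseteq> \<beta> v" using ecov edges_g'[OF e] by blast
            then show ?thesis using b'old unfolding t'_def by auto
          qed
        qed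
        show "\<forall>a\<in>verts t'. \<forall>v\<in>verts t'. \<forall>b\<in>verts t'. on_path t' a v b \<longrightarrow> \<beta>' a \<inter> \<beta>' b \<subseteq> \<beta>' v"
        proof (intro ballI impI)
          fix a v b assume o: "on_path t' a v b"
          have nb: "insert x N \<inter> \<beta> w \<subseteq> \<beta> u \<inter> \<beta> w" if "w \<in> verts t" for w
            using bsub that xW u(2) by blast
          from on_path_add_leaf[OF wft n un o[unfolded t'_def]]
          consider (i) "on_path t a v b" | (ii) "a = n" "v = n \<or> on_path t u v b" | (iii) "b = n" "v = n \<or> on_path t a v u"
            by blast
          then show "\<beta>' a \<inter> \<beta>' b \<subseteq> \<beta>' v"
          proof cases
            case i
            then have "a \<in> verts t" "v \<in> verts t" "b \<in> verts t" using on_path_verts[OF i] by simp_all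
            then show ?thesis using pc i b'old by metis
          next
            case ii
            show ?thesis
            proof (cases "v = n")
              case True then show ?thesis using ii by blast
            next
              case False
              then have op: "on_path t u v b" using ii by blast
              then have vb: "v \<in> verts t" "b \<in> verts t" using on_path_verts[OF op] by simp_all
              have "\<beta> u \<inter> \<beta> b \<subseteq> \<beta> v" using pc u(1) vb op by blast
              then show ?thesis using nb[OF vb(2)] ii b'n b'old[OF vb(1)] b'old[OF vb(2)] by auto
            qed
          next
            case iii
            show ?thesis
            proof (cases "v = n")
              case True then show ?thesis using iii by blast
            next
              case False
              then have op: "on_path t a v u" using iii by blast
              then have va: "v \<in> verts t" "a \<in> verts t" using on_path_verts[OF op] by simp_all
              have "\<beta> a \<inter> \<beta> u \<subseteq> \<beta> v" using pc u(1) va op by blast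
              then show ?thesis using nb[OF va(2)] iii b'n b'old[OF va(1)] b'old[OF va(2)] by auto
            qed
          qed
        qed
      qed
      moreover have "\<beta>' ` verts t' \<subseteq> MaxClq g"
      proof
        fix B assume "B \<in> \<beta>' ` verts t'"
        then obtain v where v: "v \<in> insert n (verts t)" "B = \<beta>' v" unfolding t'_def by auto
        show "B \<in> MaxClq g"
        proof (cases "v = n")
          case True then show ?thesis using v b'n maxN' by simp
        next
          case False
          then have "v \<in> verts t" using v by simp
          then show ?thesis using v b'old maxK'[OF bmax notN] by simp
        qed
      qed
      ultimately show ?thesis by blast
    qed
  qed
qed

theorem proposition4:
  fixes g :: "'a graph" and d :: "'b graph \<times> ('b \<Rightarrow> 'a set)"
  assumes "wf_graph g" and "chordal g" and "proper g d"
  shows "bags d = MaxClq g"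
proof -
  obtain t \<beta> where d: "d = (t, \<beta>)" by (cases d)
  have td: "tree_decomp g (t, \<beta>)" and np: "\<not> (\<exists>d' :: nat graph \<times> (nat \<Rightarrow> 'a set). tree_decomp g d' \<and> strictly_subsumes d' d)"
    using assms(3) d unfolding proper_def by auto
  obtain t' and \<beta>' :: "nat \<Rightarrow> 'a set" where ct: "tree_decomp g (t', \<beta>')" "\<beta>' ` verts t' \<subseteq> MaxClq g"
    using clique_tree[OF assms(1,2)] by blast
  have bd: "bags (t, \<beta>) = \<beta> ` verts t" "bags (t', \<beta>') = \<beta>' ` verts t'" unfolding bags_def by simp_all
  have "subsumed (t', \<beta>') d"
    unfolding subsumed_def d bd
  proof
    fix B assume "B \<in> \<beta>' ` verts t'"
    then have "is_clique g B" using ct(2) unfolding MaxClq_def by blast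
    then obtain v where "v \<in> verts t" "B \<subseteq> \<beta> v" using clique_in_bag[OF assms(1) td] by blast
    then show "\<exists>B'\<in>\<beta> ` verts t. B \<subseteq> B'" by blast
  qed
  then have sub: "bags d \<subseteq> bags (t', \<beta>')" using np ct(1) unfolding strictly_subsumes_def by blast
  then have sub2: "bags d \<subseteq> MaxClq g" using ct(2) bd by simp
  have "MaxClq g \<subseteq> bags d"
  proof
    fix K assume K: "K \<in> MaxClq g"
    then have Kc: "is_clique g K" "\<not> (\<exists>C'. is_clique g C' \<and> K \<subset> C')" unfolding MaxClq_def by blast+
    obtain v where v: "v \<in> verts t" "K \<subseteq> \<beta> v" using clique_in_bag[OF assms(1) td Kc(1)] by blast
    have "\<beta> v \<in> bags d" using v d bd by simp
    then have "is_clique g (\<beta> v)" using sub2 unfolding MaxClq_def by blast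
    then have "K = \<beta> v" using Kc(2) v(2) by blast
    then show "K \<in> bags d" using \<open>\<beta> v \<in> bags d\<close> by simp
  qed
  then show ?thesis using sub2 by blast
qed

end
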